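(* Let $\overset{1}{\nabla}$ be a concircularly semi-symmetric metric connection on an $n$-dimensional pseudo-Riemannian manifold $(\mathcal M,g)$ with generator $\pi$ and associated vector field $P$. Then $(\mathcal M,g,\overset{1}{\nabla})$ is an Einstein type manifold of the fifth kind (i.e. $\overset{5}{Ric}=\frac{\overset{5}{r}}{n}g$) if and only if $\overset{g}{Ric}=\frac{1}{2n}\big(2\overset{g}{r}-(n-1)\pi(P)\big)g+\frac{n-1}{2}\pi\otimes\pi$ (so in particular the manifold is quasi-Einstein).
   Context: Let $(\mathcal M,g)$ be an $n$-dimensional pseudo-Riemannian manifold with Levi-Civita connection $\overset{g}{\nabla}$, let $P$ be a vector field and $\pi=g(\cdot,P)$ its associated 1-form. The semi-symmetric metric connection generated by $\pi$ is $\overset{1}{\nabla}_XY=\overset{g}{\nabla}_XY+\pi(Y)X-g(X,Y)P$; it satisfies $\overset{1}{\nabla}g=0$ and has torsion $\overset{1}{T}(X,Y)=\pi(Y)X-\pi(X)Y$. It is called a concircularly semi-symmetric metric connection if there is a smooth function $\omega$ on $\mathcal M$ such that $(\overset{g}{\nabla}_X\pi)(Y)-\pi(X)\pi(Y)=\omega\, g(X,Y)$ for all vector fields $X,Y$. Curvature tensors: $\overset{1}{R}(X,Y)Z=\overset{1}{\nabla}_X\overset{1}{\nabla}_YZ-\overset{1}{\nabla}_Y\overset{1}{\nabla}_XZ-\overset{1}{\nabla}_{[X,Y]}Z$ and, with $\mathfrak S_{XYZ}$ the cyclic sum over $X,Y,Z$, $\overset{5}{R}(X,Y)Z=\overset{1}{R}(X,Y)Z-\tfrac12(\overset{1}{\nabla}_X\overset{1}{T})(Y,Z)+\tfrac12(\overset{1}{\nabla}_Y\overset{1}{T})(X,Z)-\tfrac12\mathfrak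 S_{XYZ}\overset{1}{T}(\overset{1}{T}(X,Y),Z)+\tfrac12\overset{1}{T}(\overset{1}{T}(Z,X),Y)$. The Ricci tensors are $\overset{\theta}{Ric}(Y,Z)=\mathrm{tr}(X\mapsto \overset{\theta}{R}(X,Y)Z)$, and $\overset{g}{Ric}$ is the Ricci tensor of $\overset{g}{\nabla}$ defined the same way; $\overset{\theta}{r}$ and $\overset{g}{r}$ are their $g$-traces. A manifold is quasi-Einstein if $\overset{g}{Ric}=ag+b\,\pi\otimes\pi$ for scalar functions $a,b$. *)

theory Defs
  imports "HOL-Analysis.Analysis"
begin

text \<open>A chart of the n-dimensional manifold is an open set
U of real^'n (n = CARD('n)); all tensors are given by their components in the coordinate
frame d_1..d_n.\<close>

type_synonym 'n sfun = "(real^'n) \<Rightarrow> real"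

definition pd :: "'n::finite \<Rightarrow> 'n sfun \<Rightarrow> 'n sfun" where
  "pd i f x = frechet_derivative f (at x) (axis i 1)"

fun Ck :: "nat \<Rightarrow> (real^'n::finite) set \<Rightarrow> 'n sfun \<Rightarrow> bool" where
  "Ck 0 U f = continuous_on U f"
| "Ck (Suc k) U f = (f differentiable_on U \<and> (\<forall>i. Ck k U (pd i f)))"

definition smooth_on :: "(real^'n::finite) set \<Rightarrow> 'n sfun \<Rightarrow> bool" where
  "smooth_on U f \<longleftrightarrow> (\<forall>k. Ck k U f)"

definition gmat :: "('n::finite \<Rightarrow> 'n \<Rightarrow> 'n sfun) \<Rightarrow> real^'n \<Rightarrow> real^'n^'n" where
  "gmat g x = (\<chi> i j. g i j x)"

definition pseudo_riemannian :: "(real^'n::finite) set \<Rightarrow> ('n \<Rightarrow> 'n \<Rightarrow> 'n sfun) \<Rightarrow> bool" where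
  "pseudo_riemannian U g \<longleftrightarrow> open U \<and> (\<forall>i j. smooth_on U (g i j)) \<and>
     (\<forall>i j x. g i j x = g j i x) \<and> (\<forall>x\<in>U. det (gmat g x) \<noteq> 0)"

definition ginv :: "('n::finite \<Rightarrow> 'n \<Rightarrow> 'n sfun) \<Rightarrow> 'n \<Rightarrow> 'n \<Rightarrow> 'n sfun" where
  "ginv g i j x = matrix_inv (gmat g x) $ i $ j"

text \<open>Christoffel symbols of a connection: nabla_{d_i} d_j = sum_k Gam k i j d_k.
 Levi-Civita connection of g:\<close>
definition LC :: "('n::finite \<Rightarrow> 'n \<Rightarrow> 'n sfun) \<Rightarrow> 'n \<Rightarrow> 'n \<Rightarrow> 'n \<Rightarrow> 'n sfun" where
  "LC g k i j x = (1/2) * (\<Sum>l\<in>UNIV. ginv g k l x *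
       (pd i (g j l) x + pd j (g i l) x - pd l (g i j) x))"

definition oneform :: "('n::finite \<Rightarrow> 'n \<Rightarrow> 'n sfun) \<Rightarrow> ('n \<Rightarrow> 'n sfun) \<Rightarrow> 'n \<Rightarrow> 'n sfun" where
  "oneform g P i x = (\<Sum>j\<in>UNIV. g i j x * P j x)"

text \<open>semi-symmetric metric connection nabla^1:
 nabla1_X Y = nablag_X Y + pi(Y) X - g(X,Y) P\<close>
definition SSM :: "('n::finite \<Rightarrow> 'n \<Rightarrow> 'n sfun) \<Rightarrow> ('n \<Rightarrow> 'n sfun) \<Rightarrow> 'n \<Rightarrow> 'n \<Rightarrow> 'n \<Rightarrow> 'n sfun" where
  "SSM g P k i j x = LC g k i j x + (if k = i then oneform g P j x else 0) - g i j x * P k x"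

text \<open>Curvature of a connection: R(d_i,d_j)d_k = sum_l curv Gam l k i j d_l\<close>
definition curv :: "('n::finite \<Rightarrow> 'n \<Rightarrow> 'n \<Rightarrow> 'n sfun) \<Rightarrow> 'n \<Rightarrow> 'n \<Rightarrow> 'n \<Rightarrow> 'n \<Rightarrow> 'n sfun" where
  "curv Gam l k i j x = pd i (Gam l j k) x - pd j (Gam l i k) x +
     (\<Sum>m\<in>UNIV. Gam l i m x * Gam m j k x - Gam l j m x * Gam m i k x)"

text \<open>Ricci tensor of a curvature tensor: Ric(Y,Z) = tr(X |-> R(X,Y)Z)\<close>
definition ricci_of :: "('n::finite \<Rightarrow> 'n \<Rightarrow> 'n \<Rightarrow> 'n \<Rightarrow> 'n sfun) \<Rightarrow> 'n \<Rightarrow> 'n \<Rightarrow> 'n sfun" where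
  "ricci_of R j k x = (\<Sum>i\<in>UNIV. R i k i j x)"

definition scal_of :: "('n::finite \<Rightarrow> 'n \<Rightarrow> 'n sfun) \<Rightarrow> ('n \<Rightarrow> 'n \<Rightarrow> 'n sfun) \<Rightarrow> 'n sfun" where
  "scal_of g Ric x = (\<Sum>j\<in>UNIV. \<Sum>k\<in>UNIV. ginv g j k x * Ric j k x)"

definition Ric_g :: "('n::finite \<Rightarrow> 'n \<Rightarrow> 'n sfun) \<Rightarrow> 'n \<Rightarrow> 'n \<Rightarrow> 'n sfun" where
  "Ric_g g = ricci_of (curv (LC g))"

definition r_g :: "('n::finite \<Rightarrow> 'n \<Rightarrow> 'n sfun) \<Rightarrow> 'n sfun" where
  "r_g g = scal_of g (Ric_g g)"

text \<open>Torsion of nabla^1: T(d_i,d_j) = sum_k tors k i j d_k, T(X,Y) = pi(Y)X - pi(X)Y\<close>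
definition tors :: "('n::finite \<Rightarrow> 'n \<Rightarrow> 'n sfun) \<Rightarrow> ('n \<Rightarrow> 'n sfun) \<Rightarrow> 'n \<Rightarrow> 'n \<Rightarrow> 'n \<Rightarrow> 'n sfun" where
  "tors g P k i j x = (if k = i then oneform g P j x else 0) - (if k = j then oneform g P i x else 0)"

text \<open>(nabla^1_{d_i} T)(d_j,d_l) = sum_k covT i k j l d_k\<close>
definition covT :: "('n::finite \<Rightarrow> 'n \<Rightarrow> 'n sfun) \<Rightarrow> ('n \<Rightarrow> 'n sfun) \<Rightarrow> 'n \<Rightarrow> 'n \<Rightarrow> 'n \<Rightarrow> 'n \<Rightarrow> 'n sfun" where
  "covT g P i k j l x = pd i (tors g P k j l) x
     + (\<Sum>m\<in>UNIV. SSM g P k i m x * tors g P m j l x)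
     - (\<Sum>m\<in>UNIV. SSM g P m i j x * tors g P k m l x)
     - (\<Sum>m\<in>UNIV. SSM g P m i l x * tors g P k j m x)"

text \<open>T(T(d_a,d_b),d_c) component l\<close>
definition TT :: "('n::finite \<Rightarrow> 'n \<Rightarrow> 'n sfun) \<Rightarrow> ('n \<Rightarrow> 'n sfun) \<Rightarrow> 'n \<Rightarrow> 'n \<Rightarrow> 'n \<Rightarrow> 'n \<Rightarrow> 'n sfun" where
  "TT g P l a b c x = (\<Sum>m\<in>UNIV. tors g P m a b x * tors g P l m c x)"

text \<open>R^5(X,Y)Z with X = d_i, Y = d_j, Z = d_k; component l\<close>
definition R5 :: "('n::finite \<Rightarrow> 'n \<Rightarrow> 'n sfun) \<Rightarrow> ('n \<Rightarrow> 'n sfun) \<Rightarrow> 'n \<Rightarrow> 'n \<Rightarrow> 'n \<Rightarrow> 'n \<Rightarrow> 'n sfun" where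
  "R5 g P l k i j x = curv (SSM g P) l k i j x
     - (1/2) * covT g P i l j k x + (1/2) * covT g P j l i k x
     - (1/2) * (TT g P l i j k x + TT g P l j k i x + TT g P l k i j x)
     + (1/2) * TT g P l k i j x"

definition Ric5 :: "('n::finite \<Rightarrow> 'n \<Rightarrow> 'n sfun) \<Rightarrow> ('n \<Rightarrow> 'n sfun) \<Rightarrow> 'n \<Rightarrow> 'n \<Rightarrow> 'n sfun" where
  "Ric5 g P = ricci_of (R5 g P)"

definition r5 :: "('n::finite \<Rightarrow> 'n \<Rightarrow> 'n sfun) \<Rightarrow> ('n \<Rightarrow> 'n sfun) \<Rightarrow> 'n sfun" where
  "r5 g P = scal_of g (Ric5 g P)"

text \<open>concircular condition: (nablag_X pi)(Y) - pi(X)pi(Y) = omega g(X,Y)\<close>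
definition concircular_SSM :: "(real^'n::finite) set \<Rightarrow> ('n \<Rightarrow> 'n \<Rightarrow> 'n sfun) \<Rightarrow> ('n \<Rightarrow> 'n sfun) \<Rightarrow> 'n sfun \<Rightarrow> bool" where
  "concircular_SSM U g P \<omega> \<longleftrightarrow> (\<forall>x\<in>U. \<forall>i j.
      pd i (oneform g P j) x - (\<Sum>k\<in>UNIV. LC g k i j x * oneform g P k x)
      - oneform g P i x * oneform g P j x = \<omega> x * g i j x)"

definition einstein5 :: "(real^'n::finite) set \<Rightarrow> ('n \<Rightarrow> 'n \<Rightarrow> 'n sfun) \<Rightarrow> ('n \<Rightarrow> 'n sfun) \<Rightarrow> bool" where
  "einstein5 U g P \<longleftrightarrow> (\<forall>x\<in>U. \<forall>j k.
      Ric5 g P j k x = r5 g P x / real CARD('n) * g j k x)"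

end

theory Submission
  imports Defs
begin

lemma pd_has: "(f has_derivative f') (at x) \<Longrightarrow> pd i f x = f' (axis i 1)"
  unfolding pd_def using frechet_derivative_at by metis

lemma pd_works: "f differentiable (at x) \<Longrightarrow> (f has_derivative (frechet_derivative f (at x))) (at x)"
  using frechet_derivative_works by blast

lemma pd_add: "f differentiable (at x) \<Longrightarrow> h differentiable (at x) \<Longrightarrow>
   pd i (\<lambda>y. f y + h y) x = pd i f x + pd i h x"
  using pd_has[OF has_derivative_add[OF pd_works pd_works]] by (simp add: pd_def)

lemma pd_diff: "f differentiable (at x) \<Longrightarrow> h differentiable (at x) \<Longrightarrow>
   pd i (\<lambda>y. f y - h y) x = pd i f x - pd i h x"
  using pd_has[OF has_derivative_diff[OF pd_works pd_works]] by (simp add: pd_def)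

lemma pd_mult: "f differentiable (at x) \<Longrightarrow> h differentiable (at x) \<Longrightarrow>
   pd i (\<lambda>y. f y * h y) x = f x * pd i h x + pd i f x * h x"
  using pd_has[OF has_derivative_mult[OF pd_works pd_works]] by (simp add: pd_def)

lemma pd_sum: "(\<And>m. m \<in> S \<Longrightarrow> f m differentiable (at x)) \<Longrightarrow>
   pd i (\<lambda>y. \<Sum>m\<in>S. f m y) x = (\<Sum>m\<in>S. pd i (f m) x)"
proof -
  assume "\<And>m. m \<in> S \<Longrightarrow> f m differentiable (at x)"
  then have "((\<lambda>y. \<Sum>m\<in>S. f m y) has_derivative (\<lambda>v. \<Sum>m\<in>S. frechet_derivative (f m) (at x) v)) (at x)"
    by (intro has_derivative_sum pd_works) auto
  from pd_has[OF this] show ?thesis by (simp add: pd_def)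
qed

lemma pd_const: "pd i (\<lambda>y. c) x = 0"
  by (rule pd_has[where f'="\<lambda>_. 0", simplified]) simp

lemma pd_minus: "f differentiable (at x) \<Longrightarrow> pd i (\<lambda>y. - f y) x = - pd i f x"
  using pd_diff[of "\<lambda>y. 0" x f i] pd_const[of i 0 x] by simp

lemma smooth_diff: "smooth_on U f \<Longrightarrow> open U \<Longrightarrow> x \<in> U \<Longrightarrow> f differentiable (at x)"
proof -
  assume "smooth_on U f" "open U" "x \<in> U"
  then have "Ck (Suc 0) U f" unfolding smooth_on_def by blast
  then have "f differentiable_on U" by simp
  then show ?thesis using \<open>open U\<close> \<open>x \<in> U\<close> by (metis differentiable_on_def at_within_open)
qed

lemma smooth_pd: "smooth_on U f \<Longrightarrow> smooth_on U (pd i f)"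
proof -
  assume "smooth_on U f"
  then have "Ck (Suc k) U f" for k unfolding smooth_on_def by blast
  then show ?thesis unfolding smooth_on_def by simp
qed

lemma differentiable_prod_at:
  fixes f :: "'i \<Rightarrow> 'a::real_normed_vector \<Rightarrow> real"
  assumes "finite I" "\<And>i. i \<in> I \<Longrightarrow> f i differentiable (at x)"
  shows "(\<lambda>y. \<Prod>i\<in>I. f i y) differentiable (at x)"
  using assms by (induction I rule: finite_induct) (auto intro!: differentiable_mult)

lemma det_fun_diff:
  fixes A :: "'n::finite \<Rightarrow> 'n \<Rightarrow> real^'m::finite \<Rightarrow> real"
  assumes "\<And>i j. A i j differentiable (at x)"
  shows "(\<lambda>y. det (\<chi> i j. A i j y)) differentiable (at x)"
proof -
  have "(\<lambda>y. det (\<chi> i j. A i j y)) = (\<lambda>y. \<Sum>p\<in>{p. p permutes (UNIV::'n set)}. of_int (sign p) * (\<Prod>i\<in>UNIV. A i (p i) y))"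
    by (simp add: det_def)
  moreover have "(\<lambda>y. \<Prod>i\<in>UNIV. A i (p i) y) differentiable (at x)" for p
    using assms by (intro differentiable_prod_at) auto
  ultimately show ?thesis
    by (auto intro!: differentiable_sum differentiable_mult)
qed

lemma pr_open: "pseudo_riemannian U g \<Longrightarrow> open U" by (simp add: pseudo_riemannian_def)

lemma ginv_mats:
  assumes "pseudo_riemannian U g" "x \<in> U"
  shows "gmat g x ** matrix_inv (gmat g x) = mat 1 \<and> matrix_inv (gmat g x) ** gmat g x = mat 1"
proof -
  have "invertible (gmat g x)" using assms invertible_det_nz unfolding pseudo_riemannian_def by blast
  then show ?thesis unfolding invertible_def matrix_inv_def by (rule someI_ex)
qed

lemma ginv_right:
  assumes "pseudo_riemannian U g" "x \<in> U"
  shows "(\<Sum>m\<in>UNIV. g a m x * ginv g m b x) = (if a = b then 1 else 0)"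
proof -
  have "(gmat g x ** matrix_inv (gmat g x)) $ a $ b = mat 1 $ a $ b" using ginv_mats[OF assms] by simp
  then show ?thesis by (simp add: matrix_matrix_mult_def gmat_def ginv_def mat_def)
qed

lemma ginv_left:
  assumes "pseudo_riemannian U g" "x \<in> U"
  shows "(\<Sum>m\<in>UNIV. ginv g a m x * g m b x) = (if a = b then 1 else 0)"
proof -
  have "(matrix_inv (gmat g x) ** gmat g x) $ a $ b = mat 1 $ a $ b" using ginv_mats[OF assms] by simp
  then show ?thesis by (simp add: matrix_matrix_mult_def gmat_def ginv_def mat_def)
qed

lemma ginv_cramer:
  assumes "pseudo_riemannian U g" "x \<in> U"
  shows "ginv g k l x = det (\<chi> a b. if b = k then (if a = l then 1 else 0) else g a b x) / det (gmat g x)"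
proof -
  let ?A = "gmat g x" and ?B = "matrix_inv (gmat g x)"
  have d: "det ?A \<noteq> 0" using assms unfolding pseudo_riemannian_def by blast
  have "?A *v (?B *v axis l 1) = axis l 1"
    using ginv_mats[OF assms] by (simp add: matrix_vector_mul_assoc)
  then have "?B *v axis l 1 = (\<chi> k. det(\<chi> i j. if j=k then (axis l 1)$i else ?A$i$j) / det ?A)"
    using cramer[OF d] by blast
  then have "(?B *v axis l 1) $ k = det(\<chi> i j. if j=k then (axis l 1)$i else ?A$i$j) / det ?A" by simp
  moreover have "(?B *v axis l 1) $ k = ginv g k l x"
    by (simp add: matrix_vector_mult_def axis_def ginv_def if_distrib cong: if_cong)
  moreover have "(\<chi> i j. if j=k then (axis l 1)$i else ?A$i$j) = (\<chi> a b. if b = k then (if a = l then 1 else 0) else g a b x)"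
    by (simp add: vec_eq_iff axis_def gmat_def)
  ultimately show ?thesis by simp
qed

lemma ginv_diff:
  assumes pr: "pseudo_riemannian U g" and x: "x \<in> U"
  shows "ginv g k l differentiable (at x)"
proof -
  have sm: "\<And>i j. smooth_on U (g i j)" and op: "open U" using pr unfolding pseudo_riemannian_def by auto
  have gd: "\<And>i j. g i j differentiable (at x)" using smooth_diff[OF sm op x] .
  define F where "F y = det (\<chi> a b. if b = k then (if a = l then 1 else 0) else g a b y) / det (gmat g y)" for y
  have n1: "(\<lambda>y. det (\<chi> a b. if b = k then (if a = l then 1 else 0) else g a b y)) differentiable (at x)"
    apply (rule det_fun_diff[where A = "\<lambda>a b y. if b = k then (if a = l then 1 else 0) else g a b y"])
    subgoal for a b by (cases "b = k") (simp_all add: gd)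
    done
  have n2: "(\<lambda>y. det (gmat g y)) differentiable (at x)"
    unfolding gmat_def by (rule det_fun_diff) (rule gd)
  have "F differentiable (at x)"
    unfolding F_def using n1 n2 x pr unfolding pseudo_riemannian_def by (auto intro!: differentiable_divide)
  then obtain D where "(F has_derivative D) (at x)" unfolding differentiable_def by blast
  moreover have "\<And>y. y \<in> U \<Longrightarrow> F y = ginv g k l y" unfolding F_def using ginv_cramer[OF pr] by simp
  ultimately have "(ginv g k l has_derivative D) (at x)"
    using has_derivative_transform_within_open[OF _ op x] by blast
  then show ?thesis unfolding differentiable_def by blast
qed

lemma if0_mult: "(if P then a else 0) * (b::real) = (if P then a*b else 0)" by simp
lemma mult_if0: "(b::real) * (if P then a else 0) = (if P then b*a else 0)" by simp
lemma sum_if_out: "(\<Sum>m\<in>A. if P then f m else (0::real)) = (if P then (\<Sum>m\<in>A. f m) else 0)" by simp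
lemmas dsimps = sum_if_out if0_mult mult_if0 ring_distribs sum.distrib sum_subtractf sum.delta sum.delta' sum_negf

lemma pieceE:
  fixes \<pi> :: "'n::finite \<Rightarrow> real"
  shows "(\<Sum>i\<in>UNIV. \<Sum>m\<in>UNIV.
     ((if m = k then \<pi> i else 0) - (if m = i then \<pi> k else 0)) *
     ((if i = m then \<pi> j else 0) - (if i = j then \<pi> m else 0)))
   = (1 - real CARD('n)) * \<pi> j * \<pi> k"
  by (simp add: dsimps algebra_simps)

lemma g_fun_sym: "pseudo_riemannian U g \<Longrightarrow> g i j = g j i"
  unfolding pseudo_riemannian_def by auto

lemma LC_sym: "pseudo_riemannian U g \<Longrightarrow> LC g k i j x = LC g k j i x"
  unfolding LC_def using g_fun_sym[of U g] by (simp add: algebra_simps)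

lemma LC_fun: "LC g k i j = (\<lambda>x. (1/2) * (\<Sum>l\<in>UNIV. ginv g k l x *
       (pd i (g j l) x + pd j (g i l) x - pd l (g i j) x)))"
  unfolding LC_def by auto

lemma LC_diff:
  assumes pr: "pseudo_riemannian U g" and x: "x \<in> U"
  shows "LC g k i j differentiable (at x)"
proof -
  have sm: "\<And>i j. smooth_on U (g i j)" and op: "open U" using pr unfolding pseudo_riemannian_def by auto
  have d: "\<And>a b c. pd a (g b c) differentiable (at x)"
    using smooth_diff[OF smooth_pd[OF sm] op x] by blast
  show ?thesis unfolding LC_fun
    by (intro differentiable_mult differentiable_const differentiable_sum differentiable_add differentiable_diff
       ginv_diff[OF pr x] ballI d) auto
qed

lemma oneform_fun: "oneform g P j = (\<lambda>y. \<Sum>m\<in>UNIV. g j m y * P m y)"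
  unfolding oneform_def by auto

lemma oneform_diff:
  assumes pr: "pseudo_riemannian U g" and sP: "\<forall>i. smooth_on U (P i)" and x: "x \<in> U"
  shows "oneform g P j differentiable (at x)"
proof -
  have sm: "\<And>i j. smooth_on U (g i j)" and op: "open U" using pr unfolding pseudo_riemannian_def by auto
  show ?thesis unfolding oneform_fun
    using smooth_diff[OF sm op x] smooth_diff[OF sP[rule_format] op x]
    by (auto intro!: differentiable_mult differentiable_sum)
qed

lemma LC_lower:
  assumes pr: "pseudo_riemannian U g" and x: "x \<in> U"
  shows "(\<Sum>m\<in>UNIV. LC g m a b x * g m c x) = (1/2) * (pd a (g b c) x + pd b (g a c) x - pd c (g a b) x)"
proof -
  let ?E = "\<lambda>l. pd a (g b l) x + pd b (g a l) x - pd l (g a b) x"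
  have "(\<Sum>m\<in>UNIV. LC g m a b x * g m c x) = (1/2) * (\<Sum>l\<in>UNIV. ?E l * (\<Sum>m\<in>UNIV. g c m x * ginv g m l x))"
    unfolding LC_def
    apply (simp add: sum_distrib_left sum_distrib_right)
    apply (subst sum.swap)
    apply (rule sum.cong, simp)
    apply (rule sum.cong, simp)
    using g_fun_sym[OF pr, of c] by (simp add: algebra_simps)
  also have "\<dots> = (1/2) * ?E c"
    by (simp add: ginv_right[OF pr x] dsimps)
  finally show ?thesis .
qed

lemma metric_compat:
  assumes pr: "pseudo_riemannian U g" and x: "x \<in> U"
  shows "pd a (g b c) x = (\<Sum>m\<in>UNIV. LC g m a b x * g m c x + LC g m a c x * g b m x)"
proof -
  have "(\<Sum>m\<in>UNIV. LC g m a c x * g b m x) = (\<Sum>m\<in>UNIV. LC g m a c x * g m b x)"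
    using g_fun_sym[OF pr, of b] by simp
  then show ?thesis
    using LC_lower[OF pr x, of a b c] LC_lower[OF pr x, of a c b] g_fun_sym[OF pr, of c b]
      g_fun_sym[OF pr, of c a] g_fun_sym[OF pr, of b a]
    by (simp add: sum.distrib)
qed

lemma F7_alg:
  fixes \<pi> p :: "'n::finite \<Rightarrow> real" and \<Gamma> :: "'n \<Rightarrow> 'n \<Rightarrow> 'n \<Rightarrow> real" and G H :: "'n \<Rightarrow> 'n \<Rightarrow> real"
    and d\<pi> dP :: "'n \<Rightarrow> 'n \<Rightarrow> real" and dg :: "'n \<Rightarrow> 'n \<Rightarrow> 'n \<Rightarrow> real" and w :: real
  assumes Gs: "\<And>a b. G a b = G b a"
  and left: "\<And>a b. (\<Sum>m\<in>UNIV. H a m * G m b) = (if a = b then 1 else 0)"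
  and pi: "\<And>a. (\<Sum>m\<in>UNIV. G a m * p m) = \<pi> a"
  and F1: "\<And>a b. d\<pi> a b = (\<Sum>m\<in>UNIV. \<Gamma> m a b * \<pi> m) + \<pi> a * \<pi> b + w * G a b"
  and F2: "\<And>a b c. dg a b c = (\<Sum>m\<in>UNIV. \<Gamma> m a b * G m c + \<Gamma> m a c * G b m)"
  and po: "\<And>a j. d\<pi> a j = (\<Sum>m\<in>UNIV. G j m * dP a m + dg a j m * p m)"
  shows "dP a b = (if a = b then w else 0) + \<pi> a * p b - (\<Sum>m\<in>UNIV. \<Gamma> b a m * p m)"
proof -
  define R where "R m = (if a = m then w else 0) + \<pi> a * p m - (\<Sum>c\<in>UNIV. \<Gamma> m a c * p c)" for m
  define v where "v m = dP a m - R m" for m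
  have pi3: "\<And>a. (\<Sum>m\<in>UNIV. p m * G a m) = \<pi> a" using pi by (simp add: mult.commute)
  have z: "(\<Sum>m\<in>UNIV. G j m * v m) = 0" for j
  proof -
    have e1: "(\<Sum>m\<in>UNIV. G j m * dP a m) = \<pi> a * \<pi> j + w * G a j - (\<Sum>m\<in>UNIV. \<Sum>c\<in>UNIV. \<Gamma> c a m * G j c * p m)"
    proof -
      have "(\<Sum>m\<in>UNIV. G j m * dP a m) = d\<pi> a j - (\<Sum>m\<in>UNIV. dg a j m * p m)"
        using po[of a j] by (simp add: sum.distrib)
      also have "(\<Sum>m\<in>UNIV. dg a j m * p m) = (\<Sum>c\<in>UNIV. \<Gamma> c a j * \<pi> c) + (\<Sum>m\<in>UNIV. \<Sum>c\<in>UNIV. \<Gamma> c a m * G j c * p m)"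
      proof -
        have "(\<Sum>m\<in>UNIV. dg a j m * p m) = (\<Sum>m\<in>UNIV. \<Sum>c\<in>UNIV. \<Gamma> c a j * G c m * p m) + (\<Sum>m\<in>UNIV. \<Sum>c\<in>UNIV. \<Gamma> c a m * G j c * p m)"
          unfolding F2 by (simp add: sum.distrib sum_distrib_right sum_distrib_left algebra_simps)
        also have "(\<Sum>m\<in>UNIV. \<Sum>c\<in>UNIV. \<Gamma> c a j * G c m * p m) = (\<Sum>c\<in>UNIV. \<Gamma> c a j * \<pi> c)"
          by (subst sum.swap) (simp add: mult.assoc sum_distrib_left[symmetric] pi)
        finally show ?thesis .
      qed
      finally show ?thesis unfolding F1 by simp
    qed
    have e2: "(\<Sum>m\<in>UNIV. G j m * R m) = w * G a j + \<pi> a * \<pi> j - (\<Sum>m\<in>UNIV. \<Sum>c\<in>UNIV. \<Gamma> c a m * G j c * p m)"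
    proof -
      have "(\<Sum>m\<in>UNIV. G j m * R m) = w * G j a + \<pi> a * (\<Sum>m\<in>UNIV. G j m * p m) - (\<Sum>m\<in>UNIV. \<Sum>c\<in>UNIV. G j m * \<Gamma> m a c * p c)"
        unfolding R_def by (simp add: dsimps sum_distrib_left algebra_simps)
      also have "(\<Sum>m\<in>UNIV. \<Sum>c\<in>UNIV. G j m * \<Gamma> m a c * p c) = (\<Sum>m\<in>UNIV. \<Sum>c\<in>UNIV. \<Gamma> c a m * G j c * p m)"
        by (subst sum.swap) (simp add: algebra_simps)
      finally show ?thesis using Gs[of j a] pi[of j] by simp
    qed
    show ?thesis unfolding v_def using e1 e2 by (simp add: right_diff_distrib sum_subtractf)
  qed
  have "v b = (\<Sum>j\<in>UNIV. H b j * (\<Sum>m\<in>UNIV. G j m * v m))"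
  proof -
    have "(\<Sum>j\<in>UNIV. H b j * (\<Sum>m\<in>UNIV. G j m * v m)) = (\<Sum>m\<in>UNIV. (\<Sum>j\<in>UNIV. H b j * G j m) * v m)"
      by (simp add: sum_distrib_left sum_distrib_right mult.assoc, subst sum.swap, simp)
    also have "\<dots> = v b" by (simp add: left dsimps)
    finally show ?thesis by simp
  qed
  then have "v b = 0" using z by simp
  then show ?thesis unfolding v_def R_def by simp
qed

lemma pd_oneform:
  assumes pr: "pseudo_riemannian U g" and sP: "\<forall>i. smooth_on U (P i)" and x: "x \<in> U"
  shows "pd a (oneform g P j) x = (\<Sum>m\<in>UNIV. g j m x * pd a (P m) x + pd a (g j m) x * P m x)"
proof -
  have sm: "\<And>i j. smooth_on U (g i j)" and op: "open U" using pr unfolding pseudo_riemannian_def by auto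
  have d1: "\<And>i j. g i j differentiable (at x)" using smooth_diff[OF sm op x] .
  have d2: "\<And>i. P i differentiable (at x)" using smooth_diff[OF sP[rule_format] op x] .
  show ?thesis unfolding oneform_fun
    by (subst pd_sum) (auto intro!: differentiable_mult d1 d2 simp: pd_mult[OF d1 d2])
qed

lemma F1c:
  assumes "concircular_SSM U g P \<omega>" "x \<in> U"
  shows "pd a (oneform g P b) x = (\<Sum>m\<in>UNIV. LC g m a b x * oneform g P m x) + oneform g P a x * oneform g P b x + \<omega> x * g a b x"
  using assms unfolding concircular_SSM_def by (auto simp: algebra_simps)

lemma F7c:
  assumes pr: "pseudo_riemannian U g" and sP: "\<forall>i. smooth_on U (P i)" and x: "x \<in> U"
    and cc: "concircular_SSM U g P \<omega>"
  shows "pd a (P b) x = (if a = b then \<omega> x else 0) + oneform g P a x * P b x - (\<Sum>m\<in>UNIV. LC g b a m x * P m x)"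
proof (rule F7_alg[where G="\<lambda>a b. g a b x" and H="\<lambda>a b. ginv g a b x" and p="\<lambda>a. P a x"
      and \<pi>="\<lambda>a. oneform g P a x" and d\<pi>="\<lambda>a b. pd a (oneform g P b) x" and dg="\<lambda>a b c. pd a (g b c) x"
      and \<Gamma>="\<lambda>k i j. LC g k i j x" and dP="\<lambda>a b. pd a (P b) x"])
  show "\<And>a b. g a b x = g b a x" using pr unfolding pseudo_riemannian_def by auto
  show "\<And>a b. (\<Sum>m\<in>UNIV. ginv g a m x * g m b x) = (if a = b then 1 else 0)" by (rule ginv_left[OF pr x])
  show "\<And>a. (\<Sum>m\<in>UNIV. g a m x * P m x) = oneform g P a x" by (simp add: oneform_def)
  show "\<And>a b. pd a (oneform g P b) x = (\<Sum>m\<in>UNIV. LC g m a b x * oneform g P m x) + oneform g P a x * oneform g P b x + \<omega> x * g a b x"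
    by (rule F1c[OF cc x])
  show "\<And>a b c. pd a (g b c) x = (\<Sum>m\<in>UNIV. LC g m a b x * g m c x + LC g m a c x * g b m x)"
    by (rule metric_compat[OF pr x])
  show "\<And>a j. pd a (oneform g P j) x = (\<Sum>m\<in>UNIV. g j m x * pd a (P m) x + pd a (g j m) x * P m x)"
    by (rule pd_oneform[OF pr sP x])
qed

lemma pd_SSM:
  assumes pr: "pseudo_riemannian U g" and sP: "\<forall>i. smooth_on U (P i)" and x: "x \<in> U"
  shows "pd i (SSM g P l j k) x = pd i (LC g l j k) x + (if l = j then pd i (oneform g P k) x else 0)
     - (pd i (g j k) x * P l x + g j k x * pd i (P l) x)"
proof -
  have sm: "\<And>i j. smooth_on U (g i j)" and op: "open U" using pr unfolding pseudo_riemannian_def by auto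
  have d1: "\<And>i j. g i j differentiable (at x)" using smooth_diff[OF sm op x] .
  have d2: "\<And>i. P i differentiable (at x)" using smooth_diff[OF sP[rule_format] op x] .
  have d3: "\<And>a. oneform g P a differentiable (at x)" by (rule oneform_diff[OF pr sP x])
  have d4: "\<And>a b c. LC g a b c differentiable (at x)" by (rule LC_diff[OF pr x])
  show ?thesis
  proof (cases "l = j")
    case True
    have "SSM g P l j k = (\<lambda>y. (LC g l j k y + oneform g P k y) - g j k y * P l y)"
      using True by (auto simp: SSM_def)
    then show ?thesis using True
      by (simp add: pd_diff pd_add pd_mult d1 d2 d3 d4 differentiable_add differentiable_mult algebra_simps)
  next
    case False
    have "SSM g P l j k = (\<lambda>y. LC g l j k y - g j k y * P l y)"
      using False by (auto simp: SSM_def)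
    then show ?thesis using False
      by (simp add: pd_diff pd_add pd_mult d1 d2 d3 d4 differentiable_add differentiable_mult algebra_simps)
  qed
qed

lemma pd_tors:
  assumes pr: "pseudo_riemannian U g" and sP: "\<forall>i. smooth_on U (P i)" and x: "x \<in> U"
  shows "pd a (tors g P k i j) x = (if k = i then pd a (oneform g P j) x else 0) - (if k = j then pd a (oneform g P i) x else 0)"
proof -
  have d3: "\<And>a. oneform g P a differentiable (at x)" by (rule oneform_diff[OF pr sP x])
  have z: "pd a (\<lambda>y. 0) x = 0" by (rule pd_const)
  have e: "tors g P k i j = (\<lambda>y. (if k = i then oneform g P j y else 0) - (if k = j then oneform g P i y else 0))"
    by (auto simp: tors_def)
  show ?thesis unfolding e
    by (cases "k = i"; cases "k = j") (simp_all add: pd_diff pd_minus d3 z)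
qed

lemma pieceC:
  fixes \<pi> :: "'n::finite \<Rightarrow> real" and C :: "'n \<Rightarrow> 'n \<Rightarrow> 'n \<Rightarrow> real" and d\<pi> :: "'n \<Rightarrow> 'n \<Rightarrow> real"
  defines "T \<equiv> \<lambda>k i j. (if k = i then \<pi> j else 0) - (if k = j then \<pi> i else 0)"
  defines "dT \<equiv> \<lambda>a k i j. (if k = i then d\<pi> a j else 0) - (if k = j then d\<pi> a i else 0)"
  defines "cov \<equiv> \<lambda>a k b l. dT a k b l + (\<Sum>m\<in>UNIV. C k a m * T m b l) - (\<Sum>m\<in>UNIV. C m a b * T k m l)
       - (\<Sum>m\<in>UNIV. C m a l * T k b m)"
  shows "(\<Sum>i\<in>UNIV. cov j i i k) = (real CARD('n) - 1) * (d\<pi> j k - (\<Sum>m\<in>UNIV. C m j k * \<pi> m))"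
  unfolding cov_def dT_def T_def
  by (simp add: dsimps algebra_simps)

lemma pieceB:
  fixes \<pi> :: "'n::finite \<Rightarrow> real" and C :: "'n \<Rightarrow> 'n \<Rightarrow> 'n \<Rightarrow> real" and d\<pi> :: "'n \<Rightarrow> 'n \<Rightarrow> real"
  defines "T \<equiv> \<lambda>k i j. (if k = i then \<pi> j else 0) - (if k = j then \<pi> i else 0)"
  defines "dT \<equiv> \<lambda>a k i j. (if k = i then d\<pi> a j else 0) - (if k = j then d\<pi> a i else 0)"
  defines "cov \<equiv> \<lambda>a k b l. dT a k b l + (\<Sum>m\<in>UNIV. C k a m * T m b l) - (\<Sum>m\<in>UNIV. C m a b * T k m l)
       - (\<Sum>m\<in>UNIV. C m a l * T k b m)"
  shows "(\<Sum>i\<in>UNIV. cov i i j k) = d\<pi> j k - d\<pi> k j + (\<Sum>m\<in>UNIV. (C m k j - C m j k) * \<pi> m)"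
  unfolding cov_def dT_def T_def
  by (simp add: dsimps algebra_simps)

lemma pieceD:
  fixes \<pi> :: "'n::finite \<Rightarrow> real"
  defines "T \<equiv> \<lambda>k i j. (if k = i then \<pi> j else 0) - (if k = j then \<pi> i else 0)"
  defines "TTa \<equiv> \<lambda>l a b c. (\<Sum>m\<in>UNIV. T m a b * T l m c)"
  shows "TTa l i j k + TTa l j k i + TTa l k i j = 0"
  unfolding TTa_def T_def
  by (simp add: dsimps algebra_simps)

lemma S3:
  fixes \<pi> p :: "'n::finite \<Rightarrow> real" and \<Gamma> :: "'n \<Rightarrow> 'n \<Rightarrow> 'n \<Rightarrow> real" and G :: "'n \<Rightarrow> 'n \<Rightarrow> real"
  assumes Gs: "\<And>a b. G a b = G b a"
  and pi: "\<And>a. (\<Sum>m\<in>UNIV. G a m * p m) = \<pi> a"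
  defines "C \<equiv> \<lambda>l i j. \<Gamma> l i j + (if l = i then \<pi> j else 0) - G i j * p l"
  shows "(\<Sum>i\<in>UNIV. \<Sum>m\<in>UNIV. C i i m * C m j k - C i j m * C m i k)
    = (\<Sum>i\<in>UNIV. \<Sum>m\<in>UNIV. \<Gamma> i i m * \<Gamma> m j k - \<Gamma> i j m * \<Gamma> m i k)
     + (\<Sum>i\<in>UNIV. \<Gamma> i i j) * \<pi> k - G j k * (\<Sum>i\<in>UNIV. \<Sum>m\<in>UNIV. \<Gamma> i i m * p m)
     + (real CARD('n) - 1) * (\<Sum>m\<in>UNIV. \<Gamma> m j k * \<pi> m)
     - (\<Sum>i\<in>UNIV. \<Gamma> i j i) * \<pi> k + (\<Sum>i\<in>UNIV. \<Sum>m\<in>UNIV. \<Gamma> i j m * G i k * p m)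
     - (\<Sum>m\<in>UNIV. \<Gamma> m j k * \<pi> m) + (\<Sum>i\<in>UNIV. \<Sum>m\<in>UNIV. G j m * p i * \<Gamma> m i k)
     + (real CARD('n) - 2) * (\<pi> j * \<pi> k - G j k * (\<Sum>m\<in>UNIV. \<pi> m * p m))"
proof -
  let ?n = "real CARD('n)"
  have pi2: "\<And>a. (\<Sum>m\<in>UNIV. G m a * p m) = \<pi> a" by (subst Gs) (rule pi)
  have pi3: "\<And>a. (\<Sum>m\<in>UNIV. p m * G a m) = \<pi> a" using pi by (simp add: mult.commute)
  have pi4: "\<And>a. (\<Sum>m\<in>UNIV. p m * G m a) = \<pi> a" using pi2 by (simp add: mult.commute)
  note pis = pi pi2 pi3 pi4
  define V where "V m = (\<Sum>i\<in>UNIV. \<Gamma> i i m) + (?n - 1) * \<pi> m" for m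
  have hV: "(\<Sum>i\<in>UNIV. C i i m) = V m" for m
    unfolding C_def V_def by (simp add: dsimps pis algebra_simps)
  have "(\<Sum>i\<in>UNIV. \<Sum>m\<in>UNIV. C i i m * C m j k) = (\<Sum>m\<in>UNIV. V m * C m j k)"
    by (subst sum.swap) (simp add: sum_distrib_right[symmetric] hV)
  also have "\<dots> = (\<Sum>m\<in>UNIV. V m * \<Gamma> m j k) + V j * \<pi> k - G j k * (\<Sum>m\<in>UNIV. V m * p m)"
    unfolding C_def by (simp add: dsimps sum_distrib_left algebra_simps)
  also have "\<dots> = (\<Sum>i\<in>UNIV. \<Sum>m\<in>UNIV. \<Gamma> i i m * \<Gamma> m j k) + (?n - 1) * (\<Sum>m\<in>UNIV. \<Gamma> m j k * \<pi> m)
     + (\<Sum>i\<in>UNIV. \<Gamma> i i j) * \<pi> k + (?n - 1) * \<pi> j * \<pi> k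
     - G j k * (\<Sum>i\<in>UNIV. \<Sum>m\<in>UNIV. \<Gamma> i i m * p m) - G j k * (?n - 1) * (\<Sum>m\<in>UNIV. \<pi> m * p m)"
  proof -
    have v1: "(\<Sum>m\<in>UNIV. V m * \<Gamma> m j k) = (\<Sum>i\<in>UNIV. \<Sum>m\<in>UNIV. \<Gamma> i i m * \<Gamma> m j k) + (?n - 1) * (\<Sum>m\<in>UNIV. \<Gamma> m j k * \<pi> m)"
      unfolding V_def by (simp add: ring_distribs sum.distrib sum_distrib_left sum_distrib_right, subst sum.swap, simp add: algebra_simps)
    have v2: "(\<Sum>m\<in>UNIV. V m * p m) = (\<Sum>i\<in>UNIV. \<Sum>m\<in>UNIV. \<Gamma> i i m * p m) + (?n - 1) * (\<Sum>m\<in>UNIV. \<pi> m * p m)"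
      unfolding V_def by (simp add: ring_distribs sum.distrib sum_distrib_left sum_distrib_right, subst sum.swap, simp add: algebra_simps)
    show ?thesis unfolding v1 v2 by (simp add: V_def algebra_simps)
  qed
  finally have A: "(\<Sum>i\<in>UNIV. \<Sum>m\<in>UNIV. C i i m * C m j k) = \<dots>" .
  have B: "(\<Sum>i\<in>UNIV. \<Sum>m\<in>UNIV. C i j m * C m i k) =
     (\<Sum>i\<in>UNIV. \<Sum>m\<in>UNIV. \<Gamma> i j m * \<Gamma> m i k) + (\<Sum>i\<in>UNIV. \<Gamma> i j i) * \<pi> k
     - (\<Sum>i\<in>UNIV. \<Sum>m\<in>UNIV. \<Gamma> i j m * G i k * p m) + (\<Sum>m\<in>UNIV. \<Gamma> m j k * \<pi> m)
     + \<pi> j * \<pi> k - G j k * (\<Sum>m\<in>UNIV. \<pi> m * p m)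
     - (\<Sum>i\<in>UNIV. \<Sum>m\<in>UNIV. G j m * p i * \<Gamma> m i k) - \<pi> j * \<pi> k + \<pi> j * \<pi> k"
  proof -
    have b1: "(\<Sum>i\<in>UNIV. \<Sum>m\<in>UNIV. \<Gamma> i j m * (if m = i then \<pi> k else 0)) = (\<Sum>i\<in>UNIV. \<Gamma> i j i) * \<pi> k"
      by (simp add: dsimps sum_distrib_right)
    have b2: "(\<Sum>i\<in>UNIV. \<Sum>m\<in>UNIV. (if i = j then \<pi> m else 0) * \<Gamma> m i k) = (\<Sum>m\<in>UNIV. \<Gamma> m j k * \<pi> m)"
      by (simp add: dsimps mult.commute)
    have b3: "(\<Sum>i\<in>UNIV. \<Sum>m\<in>UNIV. (if i = j then \<pi> m else 0) * (if m = i then \<pi> k else 0)) = \<pi> j * \<pi> k"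
      by (simp add: dsimps)
    have b4: "(\<Sum>i\<in>UNIV. \<Sum>m\<in>UNIV. (if i = j then \<pi> m else 0) * (G i k * p m)) = G j k * (\<Sum>m\<in>UNIV. \<pi> m * p m)"
      by (simp add: dsimps sum_distrib_left algebra_simps)
    have b5: "(\<Sum>i\<in>UNIV. \<Sum>m\<in>UNIV. (G j m * p i) * (if m = i then \<pi> k else 0)) = \<pi> j * \<pi> k"
      by (simp add: dsimps algebra_simps, simp add: sum_distrib_left[symmetric] pis)
    have b6: "(\<Sum>i\<in>UNIV. \<Sum>m\<in>UNIV. (G j m * p i) * (G i k * p m)) = \<pi> j * \<pi> k"
    proof -
      have "(\<Sum>i\<in>UNIV. \<Sum>m\<in>UNIV. (G j m * p i) * (G i k * p m)) = (\<Sum>i\<in>UNIV. p i * G i k * (\<Sum>m\<in>UNIV. G j m * p m))"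
        by (simp add: sum_distrib_left algebra_simps)
      also have "\<dots> = \<pi> k * \<pi> j" by (simp only: pi sum_distrib_right[symmetric] pis)
      finally show ?thesis by simp
    qed
    show ?thesis unfolding C_def
      by (simp only: ring_distribs sum.distrib sum_subtractf b1 b2 b3 b4 b5 b6) (simp add: algebra_simps)
  qed
  show ?thesis
    by (simp only: sum_subtractf A B) (simp add: algebra_simps)
qed

lemma pieceA:
  fixes \<pi> p :: "'n::finite \<Rightarrow> real" and \<Gamma> :: "'n \<Rightarrow> 'n \<Rightarrow> 'n \<Rightarrow> real" and G :: "'n \<Rightarrow> 'n \<Rightarrow> real"
    and d\<Gamma> :: "'n \<Rightarrow> 'n \<Rightarrow> 'n \<Rightarrow> 'n \<Rightarrow> real" and d\<pi> dP :: "'n \<Rightarrow> 'n \<Rightarrow> real" and dg :: "'n \<Rightarrow> 'n \<Rightarrow> 'n \<Rightarrow> real"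
    and w :: real
  assumes Gs: "\<And>a b. G a b = G b a"
  and \<Gamma>s: "\<And>a b c. \<Gamma> a b c = \<Gamma> a c b"
  and pi: "\<And>a. (\<Sum>m\<in>UNIV. G a m * p m) = \<pi> a"
  and F1: "\<And>a b. d\<pi> a b = (\<Sum>m\<in>UNIV. \<Gamma> m a b * \<pi> m) + \<pi> a * \<pi> b + w * G a b"
  and F2: "\<And>a b c. dg a b c = (\<Sum>m\<in>UNIV. \<Gamma> m a b * G m c + \<Gamma> m a c * G b m)"
  and F7: "\<And>a b. dP a b = (if a = b then w else 0) + \<pi> a * p b - (\<Sum>m\<in>UNIV. \<Gamma> b a m * p m)"
  defines "C \<equiv> \<lambda>l i j. \<Gamma> l i j + (if l = i then \<pi> j else 0) - G i j * p l"
  defines "dC \<equiv> \<lambda>i l j k. d\<Gamma> i l j k + (if l = j then d\<pi> i k else 0) - (dg i j k * p l + G j k * dP i l)"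
  shows "(\<Sum>i\<in>UNIV. dC i i j k - dC j i i k + (\<Sum>m\<in>UNIV. C i i m * C m j k - C i j m * C m i k))
    = (\<Sum>i\<in>UNIV. d\<Gamma> i i j k - d\<Gamma> j i i k + (\<Sum>m\<in>UNIV. \<Gamma> i i m * \<Gamma> m j k - \<Gamma> i j m * \<Gamma> m i k))
      - (real CARD('n) - 1) * (2 * w + (\<Sum>m\<in>UNIV. \<pi> m * p m)) * G j k"
proof -
  let ?n = "real CARD('n)"
  have pi2: "\<And>a. (\<Sum>m\<in>UNIV. G m a * p m) = \<pi> a" by (subst Gs) (rule pi)
  have pi3: "\<And>a. (\<Sum>m\<in>UNIV. p m * G a m) = \<pi> a" using pi by (simp add: mult.commute)
  have pi4: "\<And>a. (\<Sum>m\<in>UNIV. p m * G m a) = \<pi> a" using pi2 by (simp add: mult.commute)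
  note pis = pi pi2 pi3 pi4
  define \<Gamma>\<pi> where "\<Gamma>\<pi> = (\<Sum>m\<in>UNIV. \<Gamma> m j k * \<pi> m)"
  define \<Gamma>p where "\<Gamma>p = (\<Sum>i\<in>UNIV. \<Sum>m\<in>UNIV. \<Gamma> i i m * p m)"
  define X1 where "X1 = (\<Sum>i\<in>UNIV. \<Sum>m\<in>UNIV. \<Gamma> i j m * G i k * p m)"
  define X2 where "X2 = (\<Sum>i\<in>UNIV. \<Sum>m\<in>UNIV. G j m * p i * \<Gamma> m i k)"
  define \<pi>P where "\<pi>P = (\<Sum>m\<in>UNIV. \<pi> m * p m)"
  have S3': "(\<Sum>i\<in>UNIV. \<Sum>m\<in>UNIV. C i i m * C m j k - C i j m * C m i k)
    = (\<Sum>i\<in>UNIV. \<Sum>m\<in>UNIV. \<Gamma> i i m * \<Gamma> m j k - \<Gamma> i j m * \<Gamma> m i k)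
     + (\<Sum>i\<in>UNIV. \<Gamma> i i j) * \<pi> k - G j k * \<Gamma>p + (?n - 1) * \<Gamma>\<pi>
     - (\<Sum>i\<in>UNIV. \<Gamma> i j i) * \<pi> k + X1 - \<Gamma>\<pi> + X2 + (?n - 2) * (\<pi> j * \<pi> k - G j k * \<pi>P)"
    unfolding C_def \<Gamma>\<pi>_def \<Gamma>p_def X1_def X2_def \<pi>P_def by (rule S3[OF Gs pi])
  have tr: "(\<Sum>i\<in>UNIV. \<Gamma> i j i) = (\<Sum>i\<in>UNIV. \<Gamma> i i j)" using \<Gamma>s by metis
  have d1: "(\<Sum>i\<in>UNIV. dC i i j k) = (\<Sum>i\<in>UNIV. d\<Gamma> i i j k) + d\<pi> j k
      - (\<Sum>i\<in>UNIV. dg i j k * p i) - G j k * (\<Sum>i\<in>UNIV. dP i i)"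
    unfolding dC_def by (simp add: dsimps sum_distrib_left)
  have d2: "(\<Sum>i\<in>UNIV. dC j i i k) = (\<Sum>i\<in>UNIV. d\<Gamma> j i i k) + ?n * d\<pi> j k
      - (\<Sum>i\<in>UNIV. dg j i k * p i) - (\<Sum>i\<in>UNIV. G i k * dP j i)"
    unfolding dC_def by (simp add: dsimps)
  have g1: "(\<Sum>i\<in>UNIV. dg i j k * p i) = X1 + X2"
  proof -
    have "(\<Sum>i\<in>UNIV. dg i j k * p i) = (\<Sum>i\<in>UNIV. \<Sum>m\<in>UNIV. \<Gamma> m i j * G m k * p i) + X2"
      unfolding F2 X2_def by (simp add: sum.distrib sum_distrib_right sum_distrib_left algebra_simps)
    also have "(\<Sum>i\<in>UNIV. \<Sum>m\<in>UNIV. \<Gamma> m i j * G m k * p i) = X1"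
      unfolding X1_def by (subst sum.swap) (simp add: \<Gamma>s)
    finally show ?thesis .
  qed
  have g2: "(\<Sum>i\<in>UNIV. dg j i k * p i) = X1 + \<Gamma>\<pi>"
  proof -
    have "(\<Sum>i\<in>UNIV. dg j i k * p i) = (\<Sum>i\<in>UNIV. \<Sum>m\<in>UNIV. \<Gamma> m j i * G m k * p i)
          + (\<Sum>i\<in>UNIV. \<Sum>m\<in>UNIV. \<Gamma> m j k * (G i m * p i))"
      unfolding F2 by (simp add: sum.distrib sum_distrib_right sum_distrib_left algebra_simps)
    also have "(\<Sum>i\<in>UNIV. \<Sum>m\<in>UNIV. \<Gamma> m j i * G m k * p i) = X1"
      unfolding X1_def by (subst sum.swap) simp
    also have "(\<Sum>i\<in>UNIV. \<Sum>m\<in>UNIV. \<Gamma> m j k * (G i m * p i)) = \<Gamma>\<pi>"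
      unfolding \<Gamma>\<pi>_def by (subst sum.swap) (simp add: sum_distrib_left[symmetric] pis mult.commute)
    finally show ?thesis .
  qed
  have p1: "(\<Sum>i\<in>UNIV. dP i i) = ?n * w + \<pi>P - \<Gamma>p"
    unfolding F7 \<pi>P_def \<Gamma>p_def by (simp add: sum.distrib sum_subtractf)
  have p2: "(\<Sum>i\<in>UNIV. G i k * dP j i) = w * G j k + \<pi> j * \<pi> k - X1"
  proof -
    have "(\<Sum>i\<in>UNIV. G i k * dP j i) = w * G j k + \<pi> j * (\<Sum>i\<in>UNIV. G i k * p i) - (\<Sum>i\<in>UNIV. \<Sum>m\<in>UNIV. \<Gamma> i j m * G i k * p m)"
      unfolding F7 by (simp add: dsimps sum_distrib_left algebra_simps)
    then show ?thesis unfolding X1_def by (simp add: pis)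
  qed
  have f1: "d\<pi> j k = \<Gamma>\<pi> + \<pi> j * \<pi> k + w * G j k" unfolding \<Gamma>\<pi>_def by (rule F1)
  have "(\<Sum>i\<in>UNIV. dC i i j k - dC j i i k + (\<Sum>m\<in>UNIV. C i i m * C m j k - C i j m * C m i k))
      = (\<Sum>i\<in>UNIV. dC i i j k) - (\<Sum>i\<in>UNIV. dC j i i k) + (\<Sum>i\<in>UNIV. \<Sum>m\<in>UNIV. C i i m * C m j k - C i j m * C m i k)"
    by (simp add: sum.distrib sum_subtractf)
  also have "\<dots> = (\<Sum>i\<in>UNIV. d\<Gamma> i i j k - d\<Gamma> j i i k + (\<Sum>m\<in>UNIV. \<Gamma> i i m * \<Gamma> m j k - \<Gamma> i j m * \<Gamma> m i k))
      - (?n - 1) * (2 * w + \<pi>P) * G j k"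
    unfolding d1 d2 S3' tr g1 g2 p1 p2 f1
    by (simp add: sum.distrib sum_subtractf algebra_simps)
  finally show ?thesis unfolding \<pi>P_def .
qed

lemma master:
  fixes \<pi> p :: "'n::finite \<Rightarrow> real" and \<Gamma> :: "'n \<Rightarrow> 'n \<Rightarrow> 'n \<Rightarrow> real" and G :: "'n \<Rightarrow> 'n \<Rightarrow> real"
    and d\<Gamma> :: "'n \<Rightarrow> 'n \<Rightarrow> 'n \<Rightarrow> 'n \<Rightarrow> real" and d\<pi> dP :: "'n \<Rightarrow> 'n \<Rightarrow> real" and dg :: "'n \<Rightarrow> 'n \<Rightarrow> 'n \<Rightarrow> real"
    and w :: real
  assumes Gs: "\<And>a b. G a b = G b a"
  and \<Gamma>s: "\<And>a b c. \<Gamma> a b c = \<Gamma> a c b"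
  and pi: "\<And>a. (\<Sum>m\<in>UNIV. G a m * p m) = \<pi> a"
  and F1: "\<And>a b. d\<pi> a b = (\<Sum>m\<in>UNIV. \<Gamma> m a b * \<pi> m) + \<pi> a * \<pi> b + w * G a b"
  and F2: "\<And>a b c. dg a b c = (\<Sum>m\<in>UNIV. \<Gamma> m a b * G m c + \<Gamma> m a c * G b m)"
  and F7: "\<And>a b. dP a b = (if a = b then w else 0) + \<pi> a * p b - (\<Sum>m\<in>UNIV. \<Gamma> b a m * p m)"
  defines "C \<equiv> \<lambda>l i j. \<Gamma> l i j + (if l = i then \<pi> j else 0) - G i j * p l"
  defines "dC \<equiv> \<lambda>i l j k. d\<Gamma> i l j k + (if l = j then d\<pi> i k else 0) - (dg i j k * p l + G j k * dP i l)"
  defines "curvC \<equiv> \<lambda>l k i j. dC i l j k - dC j l i k + (\<Sum>m\<in>UNIV. C l i m * C m j k - C l j m * C m i k)"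
  defines "curvG \<equiv> \<lambda>l k i j. d\<Gamma> i l j k - d\<Gamma> j l i k + (\<Sum>m\<in>UNIV. \<Gamma> l i m * \<Gamma> m j k - \<Gamma> l j m * \<Gamma> m i k)"
  defines "T \<equiv> \<lambda>k i j. (if k = i then \<pi> j else 0) - (if k = j then \<pi> i else 0)"
  defines "dT \<equiv> \<lambda>a k i j. (if k = i then d\<pi> a j else 0) - (if k = j then d\<pi> a i else 0)"
  defines "cov \<equiv> \<lambda>a k b l. dT a k b l + (\<Sum>m\<in>UNIV. C k a m * T m b l) - (\<Sum>m\<in>UNIV. C m a b * T k m l)
       - (\<Sum>m\<in>UNIV. C m a l * T k b m)"
  defines "TTa \<equiv> \<lambda>l a b c. (\<Sum>m\<in>UNIV. T m a b * T l m c)"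
  defines "R5a \<equiv> \<lambda>l k i j. curvC l k i j - (1/2) * cov i l j k + (1/2) * cov j l i k
     - (1/2) * (TTa l i j k + TTa l j k i + TTa l k i j) + (1/2) * TTa l k i j"
  shows "(\<Sum>i\<in>UNIV. R5a i k i j) = (\<Sum>i\<in>UNIV. curvG i k i j)
     + ((real CARD('n) - 1) * ((1/2) * (w + (\<Sum>m\<in>UNIV. \<pi> m * p m)) - (2 * w + (\<Sum>m\<in>UNIV. \<pi> m * p m)))) * G j k
     - (real CARD('n) - 1) / 2 * (\<pi> j * \<pi> k)"
proof -
  let ?n = "real CARD('n)"
  let ?\<pi>P = "(\<Sum>m\<in>UNIV. \<pi> m * p m)"
  have A: "(\<Sum>i\<in>UNIV. curvC i k i j) = (\<Sum>i\<in>UNIV. curvG i k i j) - (?n - 1) * (2 * w + ?\<pi>P) * G j k"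
    unfolding curvC_def curvG_def C_def dC_def by (rule pieceA[OF Gs \<Gamma>s pi F1 F2 F7])
  have B0: "(\<Sum>i\<in>UNIV. cov i i j k) = d\<pi> j k - d\<pi> k j + (\<Sum>m\<in>UNIV. (C m k j - C m j k) * \<pi> m)"
    unfolding cov_def dT_def T_def by (rule pieceB)
  have B: "(\<Sum>i\<in>UNIV. cov i i j k) = 0"
  proof -
    have "(\<Sum>m\<in>UNIV. (C m k j - C m j k) * \<pi> m) = 0"
      unfolding C_def by (simp add: \<Gamma>s[of _ k j] Gs[of k j] dsimps algebra_simps)
    moreover have "d\<pi> j k = d\<pi> k j" unfolding F1 by (simp add: \<Gamma>s[of _ k j] Gs[of k j] mult.commute)
    ultimately show ?thesis using B0 by simp
  qed
  have C0: "(\<Sum>i\<in>UNIV. cov j i i k) = (?n - 1) * (d\<pi> j k - (\<Sum>m\<in>UNIV. C m j k * \<pi> m))"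
    unfolding cov_def dT_def T_def by (rule pieceC)
  have Cc: "(\<Sum>i\<in>UNIV. cov j i i k) = (?n - 1) * (w + ?\<pi>P) * G j k"
  proof -
    have s: "(\<Sum>m\<in>UNIV. C m j k * \<pi> m) = (\<Sum>m\<in>UNIV. \<Gamma> m j k * \<pi> m) + \<pi> j * \<pi> k - G j k * ?\<pi>P"
      unfolding C_def by (simp add: dsimps sum_distrib_left algebra_simps)
    show ?thesis unfolding C0 s F1[of j k] by (simp add: algebra_simps)
  qed
  have D: "\<And>i. TTa i i j k + TTa i j k i + TTa i k i j = 0"
    unfolding TTa_def T_def by (rule pieceD)
  have E: "(\<Sum>i\<in>UNIV. TTa i k i j) = (1 - ?n) * \<pi> j * \<pi> k"
    unfolding TTa_def T_def by (rule pieceE)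
  have R: "\<And>i. R5a i k i j = curvC i k i j - (1/2) * cov i i j k + (1/2) * cov j i i k + (1/2) * TTa i k i j"
    unfolding R5a_def using D by simp
  have "(\<Sum>i\<in>UNIV. R5a i k i j) = (\<Sum>i\<in>UNIV. curvC i k i j) - (1/2) * (\<Sum>i\<in>UNIV. cov i i j k)
     + (1/2) * (\<Sum>i\<in>UNIV. cov j i i k) + (1/2) * (\<Sum>i\<in>UNIV. TTa i k i j)"
    unfolding R by (simp add: sum.distrib sum_subtractf sum_distrib_left)
  also have "\<dots> = (\<Sum>i\<in>UNIV. curvG i k i j) - (?n - 1) * (2 * w + ?\<pi>P) * G j k
     + (1/2) * ((?n - 1) * (w + ?\<pi>P) * G j k) + (1/2) * ((1 - ?n) * \<pi> j * \<pi> k)"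
    unfolding A B Cc E by simp
  also have "\<dots> = (\<Sum>i\<in>UNIV. curvG i k i j)
     + ((real CARD('n) - 1) * ((1/2) * (w + ?\<pi>P) - (2 * w + ?\<pi>P))) * G j k
     - (real CARD('n) - 1) / 2 * (\<pi> j * \<pi> k)"
    by (simp add: field_simps)
  finally show ?thesis .
qed

theorem mainTheorem8:
  fixes U :: "(real^'n::finite) set"
    and g :: "'n \<Rightarrow> 'n \<Rightarrow> (real^'n) \<Rightarrow> real"
    and P :: "'n \<Rightarrow> (real^'n) \<Rightarrow> real"
    and \<omega> :: "(real^'n) \<Rightarrow> real"
  assumes "pseudo_riemannian U g"
    and "\<forall>i. smooth_on U (P i)"
    and "smooth_on U \<omega>"
    and "concircular_SSM U g P \<omega>"
  shows "einstein5 U g P \<longleftrightarrow>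
    (\<forall>x\<in>U. \<forall>j k. Ric_g g j k x =
        1 / (2 * real CARD('n)) * (2 * r_g g x - (real CARD('n) - 1) * (\<Sum>i\<in>UNIV. oneform g P i x * P i x)) * g j k x
        + (real CARD('n) - 1) / 2 * (oneform g P j x * oneform g P k x))"
proof -
  note pr = assms(1) and sP = assms(2) and cc = assms(4)
  let ?n = "real CARD('n)"
  define \<pi>P where "\<pi>P x = (\<Sum>i\<in>UNIV. oneform g P i x * P i x)" for x
  define c where "c x = (?n - 1) * ((1/2) * (\<omega> x + \<pi>P x) - (2 * \<omega> x + \<pi>P x))" for x
  have Gs: "\<And>a b x. g a b x = g b a x" using pr unfolding pseudo_riemannian_def by auto
  have RicE: "Ric5 g P j k x = Ric_g g j k x + c x * g j k x - (?n - 1) / 2 * (oneform g P j x * oneform g P k x)"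
    if x: "x \<in> U" for x j k
  proof -
    note Mx = master[where G="\<lambda>a b. g a b x" and \<Gamma>="\<lambda>k i j. LC g k i j x" and \<pi>="\<lambda>a. oneform g P a x"
      and p="\<lambda>a. P a x" and d\<Gamma>="\<lambda>i l j k. pd i (LC g l j k) x" and d\<pi>="\<lambda>a b. pd a (oneform g P b) x"
      and dP="\<lambda>a b. pd a (P b) x" and dg="\<lambda>a b c. pd a (g b c) x" and w="\<omega> x" and j=j and k=k,
      OF Gs LC_sym[OF pr] _ F1c[OF cc x] metric_compat[OF pr x] F7c[OF pr sP x cc]]
    have pi: "\<And>a. (\<Sum>m\<in>UNIV. g a m x * P m x) = oneform g P a x" by (simp add: oneform_def)
    show ?thesis
      unfolding Ric5_def Ric_g_def ricci_of_def R5_def curv_def covT_def TT_def pd_SSM[OF pr sP x] pd_tors[OF pr sP x]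
      unfolding SSM_def tors_def c_def \<pi>P_def
      by (rule Mx[OF pi])
  qed
  have rE: "r5 g P x = r_g g x + c x * ?n - (?n - 1) / 2 * \<pi>P x" if x: "x \<in> U" for x
  proof -
    have t1: "(\<Sum>j\<in>UNIV. \<Sum>k\<in>UNIV. ginv g j k x * g j k x) = ?n"
    proof -
      have "(\<Sum>k\<in>UNIV. ginv g j k x * g j k x) = 1" for j
        using ginv_left[OF pr x, of j j] Gs by simp
      then show ?thesis by simp
    qed
    have t2: "(\<Sum>j\<in>UNIV. \<Sum>k\<in>UNIV. ginv g j k x * (oneform g P j x * oneform g P k x)) = \<pi>P x"
    proof -
      have hP: "(\<Sum>k\<in>UNIV. ginv g j k x * oneform g P k x) = P j x" for j
      proof -
        have "(\<Sum>k\<in>UNIV. ginv g j k x * oneform g P k x) = (\<Sum>m\<in>UNIV. (\<Sum>k\<in>UNIV. ginv g j k x * g k m x) * P m x)"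
          unfolding oneform_def by (simp add: sum_distrib_left sum_distrib_right mult.assoc, subst sum.swap, simp)
        also have "\<dots> = P j x" by (simp add: ginv_left[OF pr x] dsimps)
        finally show ?thesis .
      qed
      have "(\<Sum>j\<in>UNIV. \<Sum>k\<in>UNIV. ginv g j k x * (oneform g P j x * oneform g P k x))
           = (\<Sum>j\<in>UNIV. oneform g P j x * (\<Sum>k\<in>UNIV. ginv g j k x * oneform g P k x))"
        by (simp add: sum_distrib_left algebra_simps)
      also have "\<dots> = \<pi>P x" unfolding \<pi>P_def using hP by (simp add: mult.commute)
      finally show ?thesis .
    qed
    have "r5 g P x = (\<Sum>j\<in>UNIV. \<Sum>k\<in>UNIV. ginv g j k x * Ric_g g j k x)
        + c x * (\<Sum>j\<in>UNIV. \<Sum>k\<in>UNIV. ginv g j k x * g j k x)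
        - (?n - 1) / 2 * (\<Sum>j\<in>UNIV. \<Sum>k\<in>UNIV. ginv g j k x * (oneform g P j x * oneform g P k x))"
      unfolding r5_def scal_of_def RicE[OF x]
      by (simp add: ring_distribs sum.distrib sum_subtractf sum_distrib_left algebra_simps)
    then show ?thesis unfolding t1 t2 r_g_def scal_of_def by simp
  qed
  have npos: "?n > 0" by simp
  have pt: "(Ric5 g P j k x = r5 g P x / ?n * g j k x) \<longleftrightarrow>
      (Ric_g g j k x = 1 / (2 * ?n) * (2 * r_g g x - (?n - 1) * \<pi>P x) * g j k x
        + (?n - 1) / 2 * (oneform g P j x * oneform g P k x))" if x: "x \<in> U" for x j k
  proof -
    have co: "r5 g P x / ?n = 1 / (2 * ?n) * (2 * r_g g x - (?n - 1) * \<pi>P x) + c x"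
      unfolding rE[OF x] using npos by (simp add: field_simps)
    show ?thesis unfolding RicE[OF x] co by (auto simp: algebra_simps)
  qed
  show ?thesis unfolding einstein5_def using pt unfolding \<pi>P_def by simp
qed

end
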